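(* Let $\mathcal S\in\Sigma^n$ be a string over an integer alphabet $\Sigma$ and let $\pi:[n]\to[n]$ be an order-preserving permutation for $\mathcal S$. Then $\mathcal S$ can be compressed in $O(|\mathrm{PDA}_\pi|\log n)$ bits of space, i.e., there is a representation of $\mathcal S$ of $O(|\mathrm{PDA}_\pi|\log n)$ bits from which $\mathcal S$ can be reconstructed.
   Context: For a string $\mathcal S$ of length $n$ and $i\neq j$, $\mathrm{rlce}(i,j)$ denotes the length of the longest common prefix of $\mathcal S[i,n]$ and $\mathcal S[j,n]$. A permutation $\pi:[n]\to[n]$ is order-preserving for $\mathcal S$ if for all $i,j\in[n-1]$, $\pi(i)<\pi(j)$ and $\mathcal S[i,i+1]=\mathcal S[j,j+1]$ imply $\pi(i+1)<\pi(j+1)$. The generalized longest previous factor array is $\mathrm{LPF}_\pi[i]=0$ if $\pi(i)=1$ and $\mathrm{LPF}_\pi[i]=\max_{\pi(j)<\pi(i)}\mathrm{rlce}(j,i)$ otherwise. The path decomposition array $\mathrm{PDA}_\pi$ is the set $\{i+\mathrm{LPF}_\pi[i]: i\in[n]\}$ (without duplicates) sorted by the colexicographic order of the prefixes $\mathcal S[1,j]$; $|\mathrm{PDA}_\pi|$ is its number of elements. *)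

theory Defs
  imports Complex_Main
begin

(* Strings are lists of naturals (integer alphabet); positions are 1-based:
   position i of S (1 <= i <= length S) is S ! (i - 1). *)

fun lcp :: "'a list \<Rightarrow> 'a list \<Rightarrow> nat" where
  "lcp (x # xs) (y # ys) = (if x = y then Suc (lcp xs ys) else 0)"
| "lcp _ _ = 0"

definition rlce :: "'a list \<Rightarrow> nat \<Rightarrow> nat \<Rightarrow> nat" where
  "rlce S i j = lcp (drop (i - 1) S) (drop (j - 1) S)"

definition chr :: "'a list \<Rightarrow> nat \<Rightarrow> 'a" where
  "chr S i = S ! (i - 1)"

definition order_preserving :: "'a list \<Rightarrow> (nat \<Rightarrow> nat) \<Rightarrow> bool" where
  "order_preserving S \<pi> \<longleftrightarrow>
     bij_betw \<pi> {1..length S} {1..length S} \<and>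
     (\<forall>i\<in>{1..length S - 1}. \<forall>j\<in>{1..length S - 1}.
        \<pi> i < \<pi> j \<and> chr S i = chr S j \<and> chr S (i+1) = chr S (j+1)
        \<longrightarrow> \<pi> (i+1) < \<pi> (j+1))"

definition LPF :: "'a list \<Rightarrow> (nat \<Rightarrow> nat) \<Rightarrow> nat \<Rightarrow> nat" where
  "LPF S \<pi> i = (if \<pi> i = 1 then 0
      else Max {rlce S j i | j. j \<in> {1..length S} \<and> \<pi> j < \<pi> i})"

(* The set of entries of PDA_pi; its ordering is irrelevant for |PDA_pi| *)
definition PDA_set :: "'a list \<Rightarrow> (nat \<Rightarrow> nat) \<Rightarrow> nat set" where
  "PDA_set S \<pi> = {i + LPF S \<pi> i | i. i \<in> {1..length S}}"

end

theory Submission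
  imports Defs
begin

section \<open>Binary codes\<close>

fun bits :: "nat \<Rightarrow> bool list" where
  "bits n = (if n = 0 then [] else odd n # bits (n div 2))"
declare bits.simps[simp del]

fun val :: "bool list \<Rightarrow> nat" where
  "val [] = 0"
| "val (b # bs) = (if b then 1 else 0) + 2 * val bs"

lemma val_bits: "val (bits n) = n"
  by (induction n rule: bits.induct) (subst bits.simps, auto)

lemma len_bits: "x < 2 ^ t \<Longrightarrow> length (bits x) \<le> t"
proof (induction t arbitrary: x)
  case 0 then show ?case by (simp add: bits.simps)
next
  case (Suc t)
  show ?case
  proof (cases "x = 0")
    case True then show ?thesis by (simp add: bits.simps)
  next
    case False
    have "x div 2 < 2 ^ t" using Suc.prems by auto
    then have "length (bits (x div 2)) \<le> t" by (rule Suc.IH)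
    then show ?thesis using False by (subst bits.simps) simp
  qed
qed

lemma bits_pow: "n > 0 \<Longrightarrow> 2 ^ (length (bits n) - 1) \<le> n"
proof (induction n rule: bits.induct)
  case (1 n)
  show ?case
  proof (cases "n div 2 = 0")
    case True then show ?thesis using 1 by (subst bits.simps) (simp add: bits.simps)
  next
    case False
    then have h: "2 ^ (length (bits (n div 2)) - 1) \<le> n div 2" using 1 by auto
    have ne: "bits (n div 2) \<noteq> []" using False by (subst bits.simps) simp
    have "2 ^ (length (bits n) - 1) = 2 * 2 ^ (length (bits (n div 2)) - 1)"
      using 1 ne by (subst bits.simps) (cases "bits (n div 2)", auto)
    also have "\<dots> \<le> 2 * (n div 2)" using h by simp
    also have "\<dots> \<le> n" by simp
    finally show ?thesis .
  qed
qed

lemma bits_gt: "n < 2 ^ length (bits n)"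
proof (induction n rule: bits.induct)
  case (1 n)
  show ?case
  proof (cases "n = 0")
    case True then show ?thesis by (simp add: bits.simps)
  next
    case False
    then have "n div 2 < 2 ^ length (bits (n div 2))" using 1 by auto
    then show ?thesis using False by (subst bits.simps) simp
  qed
qed

definition enc_num :: "nat \<Rightarrow> bool list" where
  "enc_num x = concat (map (\<lambda>b. [True, b]) (bits x)) @ [False]"

definition enc :: "nat list \<Rightarrow> bool list" where
  "enc xs = concat (map enc_num xs)"

fun dl :: "bool list \<Rightarrow> bool list \<Rightarrow> bool list list" where
  "dl acc (True # b # r) = dl (acc @ [b]) r"
| "dl acc (False # r) = acc # dl [] r"
| "dl acc _ = []"

lemma dl_bits: "dl acc (concat (map (\<lambda>b. [True, b]) bs) @ rest) = dl (acc @ bs) rest"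
  by (induction bs arbitrary: acc) auto

lemma dl_enc: "dl [] (enc xs) = map bits xs"
  by (induction xs) (auto simp: enc_def enc_num_def dl_bits)

lemma enc_inj: "enc xs = enc ys \<Longrightarrow> xs = ys"
proof -
  assume "enc xs = enc ys"
  then have "map val (dl [] (enc xs)) = map val (dl [] (enc ys))" by simp
  then show ?thesis by (simp add: dl_enc comp_def val_bits)
qed

lemma len_enc: "(\<forall>x\<in>set xs. x < 2 ^ T) \<Longrightarrow> length (enc xs) \<le> length xs * (2 * T + 1)"
proof (induction xs)
  case Nil then show ?case by (simp add: enc_def)
next
  case (Cons x xs)
  have "length (bits x) \<le> T" using Cons.prems len_bits by auto
  moreover have "length (enc_num x) = 2 * length (bits x) + 1"
    by (simp add: enc_num_def length_concat comp_def sum_list_triv)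
  ultimately have "length (enc_num x) \<le> 2 * T + 1" by simp
  then show ?case using Cons by (simp add: enc_def)
qed

lemma lcp_nth: "m < lcp xs ys \<Longrightarrow> m < length xs \<and> m < length ys \<and> xs ! m = ys ! m"
  by (induction xs ys arbitrary: m rule: lcp.induct) (auto split: if_splits nat.splits simp: less_Suc_eq_0_disj)

lemma lcp_le: "lcp xs ys \<le> length ys"
  by (induction xs ys rule: lcp.induct) auto

lemma shift:
  assumes op: "order_preserving S \<pi>" and j: "j \<in> {1..length S}" and i: "i \<in> {1..length S}"
    and lt: "\<pi> j < \<pi> i"
  shows "m < rlce S j i \<Longrightarrow> j + m \<le> length S \<and> i + m \<le> length S \<and>
      chr S (j + m) = chr S (i + m) \<and> \<pi> (j + m) < \<pi> (i + m)"
proof (induction m)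
  case 0
  have "0 < lcp (drop (j - 1) S) (drop (i - 1) S)" using 0 by (simp add: rlce_def)
  from lcp_nth[OF this] show ?case using j i lt by (auto simp: chr_def)
next
  case (Suc m)
  have IH: "j + m \<le> length S \<and> i + m \<le> length S \<and>
      chr S (j + m) = chr S (i + m) \<and> \<pi> (j + m) < \<pi> (i + m)" using Suc by simp
  have "Suc m < lcp (drop (j - 1) S) (drop (i - 1) S)" using Suc.prems by (simp add: rlce_def)
  from lcp_nth[OF this] have A: "j + Suc m \<le> length S" "i + Suc m \<le> length S"
     "chr S (j + Suc m) = chr S (i + Suc m)" using j i
    by (auto simp: chr_def)
  have opp: "\<forall>a\<in>{1..length S - 1}. \<forall>b\<in>{1..length S - 1}.
        \<pi> a < \<pi> b \<and> chr S a = chr S b \<and> chr S (a+1) = chr S (b+1) \<longrightarrow> \<pi> (a+1) < \<pi> (b+1)"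
    using op by (simp add: order_preserving_def)
  have mem: "j + m \<in> {1..length S - 1}" "i + m \<in> {1..length S - 1}" using A(1,2) j i by auto
  have imp: "\<pi> (j + m) < \<pi> (i + m) \<and> chr S (j + m) = chr S (i + m) \<and> chr S (j + m + 1) = chr S (i + m + 1)
      \<longrightarrow> \<pi> (j + m + 1) < \<pi> (i + m + 1)"
    using opp mem by blast
  have c3: "chr S (j + m + 1) = chr S (i + m + 1)" using A(3) by simp
  have "\<pi> (j + m + 1) < \<pi> (i + m + 1)" using imp IH c3 by blast
  then show ?case using A by simp
qed

definition src :: "nat list \<Rightarrow> (nat \<Rightarrow> nat) \<Rightarrow> nat \<Rightarrow> nat" where
  "src S \<pi> i = (SOME j. j \<in> {1..length S} \<and> \<pi> j < \<pi> i \<and> rlce S j i = LPF S \<pi> i)"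

lemma exists_smaller:
  assumes op: "order_preserving S \<pi>" and i: "i \<in> {1..length S}" and ne: "\<pi> i \<noteq> 1"
  shows "\<exists>j\<in>{1..length S}. \<pi> j < \<pi> i"
proof -
  have b: "bij_betw \<pi> {1..length S} {1..length S}" using op by (simp add: order_preserving_def)
  have pi: "\<pi> i \<in> {1..length S}" by (rule bij_betw_apply[OF b i])
  have surj: "\<pi> ` {1..length S} = {1..length S}" using b by (simp add: bij_betw_def)
  have "1 \<in> {1..length S}" using i by auto
  then have "1 \<in> \<pi> ` {1..length S}" by (simp only: surj)
  then obtain j where j: "1 = \<pi> j" "j \<in> {1..length S}" by (rule imageE)
  have "\<pi> j < \<pi> i" using j(1) pi ne by simp
  then show ?thesis using j(2) by blast
qed

lemma LPF_facts:
  assumes op: "order_preserving S \<pi>" and i: "i \<in> {1..length S}"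
  shows "i + LPF S \<pi> i \<le> length S + 1 \<and>
    (LPF S \<pi> i > 0 \<longrightarrow> src S \<pi> i \<in> {1..length S} \<and> \<pi> (src S \<pi> i) < \<pi> i
       \<and> rlce S (src S \<pi> i) i = LPF S \<pi> i)"
proof (cases "\<pi> i = 1")
  case True
  then have "LPF S \<pi> i = 0" by (simp add: LPF_def)
  then show ?thesis using i by simp
next
  case False
  define A where "A = {rlce S j i | j. j \<in> {1..length S} \<and> \<pi> j < \<pi> i}"
  have "{j. j \<in> {1..length S} \<and> \<pi> j < \<pi> i} \<subseteq> {1..length S}" by blast
  then have "finite {j. j \<in> {1..length S} \<and> \<pi> j < \<pi> i}" by (rule finite_subset) simp
  then have fin: "finite A" unfolding A_def by (rule finite_image_set)
  obtain j0 where j0: "j0 \<in> {1..length S}" "\<pi> j0 < \<pi> i" using exists_smaller[OF op i False] by blast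
  have "rlce S j0 i \<in> A" unfolding A_def using j0 by blast
  then have ne: "A \<noteq> {}" by blast
  have L: "LPF S \<pi> i = Max A" unfolding LPF_def A_def using False by (simp only: if_False)
  have "Max A \<in> A" using fin ne by (rule Max_in)
  then have "\<exists>j. Max A = rlce S j i \<and> j \<in> {1..length S} \<and> \<pi> j < \<pi> i"
    unfolding A_def by (simp only: mem_Collect_eq)
  then obtain j where j: "j \<in> {1..length S}" "\<pi> j < \<pi> i" "rlce S j i = LPF S \<pi> i"
    unfolding L by metis
  have "rlce S j i \<le> length (drop (i - 1) S)" unfolding rlce_def by (rule lcp_le)
  then have "LPF S \<pi> i \<le> length S - (i - 1)" using j(3) by simp
  moreover have "i \<le> length S" "1 \<le> i" using i by auto
  ultimately have 1: "i + LPF S \<pi> i \<le> length S + 1" by linarith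
  have "src S \<pi> i \<in> {1..length S} \<and> \<pi> (src S \<pi> i) < \<pi> i \<and> rlce S (src S \<pi> i) i = LPF S \<pi> i"
    unfolding src_def by (rule someI[of _ j]) (use j in blast)
  then show ?thesis using 1 by simp
qed

function parse :: "nat list \<Rightarrow> (nat \<Rightarrow> nat) \<Rightarrow> nat \<Rightarrow> (nat \<times> nat \<times> nat) list" where
  "parse S \<pi> i = (if i = 0 \<or> length S < i then []
     else if LPF S \<pi> i = 0 then (0, 0, chr S i) # parse S \<pi> (i + 1)
     else (LPF S \<pi> i, src S \<pi> i, 0) # parse S \<pi> (i + LPF S \<pi> i))"
  by pat_completeness auto
termination by (relation "measure (\<lambda>(S, \<pi>, i). Suc (length S) - i)") auto
declare parse.simps[simp del]

fun lookup :: "nat \<Rightarrow> (nat \<times> nat \<times> nat) list \<Rightarrow> nat \<Rightarrow> nat + nat" where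
  "lookup s [] q = Inl 0"
| "lookup s ((L, j, c) # r) q = (if L = 0 then (if q = s then Inl c else lookup (s + 1) r q)
     else if q < s + L then Inr (j + (q - s)) else lookup (s + L) r q)"

lemma cover:
  shows "order_preserving S \<pi> \<Longrightarrow> 1 \<le> i \<Longrightarrow> i \<le> q \<Longrightarrow> q \<le> length S \<Longrightarrow>
    (case lookup i (parse S \<pi> i) q of Inl c \<Rightarrow> chr S q = c
      | Inr j \<Rightarrow> 1 \<le> j \<and> j \<le> length S \<and> chr S j = chr S q \<and> \<pi> j < \<pi> q)"
proof (induction S \<pi> i rule: parse.induct)
  case (1 S \<pi> i)
  note op = 1(3)
  show ?case
  proof (cases "LPF S \<pi> i = 0")
    case True
    have p: "parse S \<pi> i = (0, 0, chr S i) # parse S \<pi> (i + 1)"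
      using True 1 by (subst parse.simps) simp
    show ?thesis
    proof (cases "q = i")
      case True then show ?thesis using p by simp
    next
      case False
      then show ?thesis using p 1 \<open>LPF S \<pi> i = 0\<close> by simp
    qed
  next
    case False
    have iS: "i \<in> {1..length S}" using 1 by auto
    note F = LPF_facts[OF op iS]
    have p: "parse S \<pi> i = (LPF S \<pi> i, src S \<pi> i, 0) # parse S \<pi> (i + LPF S \<pi> i)"
      using False 1 by (subst parse.simps) simp
    show ?thesis
    proof (cases "q < i + LPF S \<pi> i")
      case True
      define m where "m = q - i"
      have m: "m < rlce S (src S \<pi> i) i" using F False True 1 by (simp add: m_def)
      have sh: "src S \<pi> i + m \<le> length S \<and> i + m \<le> length S \<and>
        chr S (src S \<pi> i + m) = chr S (i + m) \<and> \<pi> (src S \<pi> i + m) < \<pi> (i + m)"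
        using shift[OF op _ iS _ m] F False by auto
      have "i + m = q" using 1 by (simp add: m_def)
      have s1: "Suc 0 \<le> src S \<pi> i + q - i" using F False 1(5) by auto
      then show ?thesis using p True False sh F 1(4,5) s1 by (simp add: m_def)
    next
      case fq: False
      then show ?thesis using p 1 False by simp
    qed
  qed
qed

definition nums :: "nat list \<Rightarrow> (nat \<Rightarrow> nat) \<Rightarrow> nat list" where
  "nums S \<pi> = length S # concat (map (\<lambda>(a, b, c). [a, b, c]) (parse S \<pi> 1))"

lemma concat_triples_inj:
  "concat (map (\<lambda>(a::nat, b::nat, c::nat). [a, b, c]) xs) = concat (map (\<lambda>(a, b, c). [a, b, c]) ys) \<Longrightarrow> xs = ys"
proof (induction xs arbitrary: ys)
  case Nil then show ?case by (cases ys) auto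
next
  case (Cons x xs)
  obtain a b c where x: "x = (a, b, c)" by (cases x) auto
  show ?case
  proof (cases ys)
    case Nil then show ?thesis using Cons.prems x by simp
  next
    case (Cons y ys')
    obtain a' b' c' where y: "y = (a', b', c')" by (cases y) auto
    show ?thesis using Cons.prems Cons.IH[of ys'] x y \<open>ys = y # ys'\<close> by simp
  qed
qed

lemma nums_inj:
  assumes op: "order_preserving S \<pi>" and op': "order_preserving S' \<pi>'"
    and eq: "nums S \<pi> = nums S' \<pi>'"
  shows "S = S'"
proof -
  have len: "length S = length S'" using eq by (simp add: nums_def)
  have pe: "parse S \<pi> 1 = parse S' \<pi>' 1" using eq concat_triples_inj by (simp add: nums_def)
  have main: "\<And>q. \<pi> q = v \<Longrightarrow> 1 \<le> q \<Longrightarrow> q \<le> length S \<Longrightarrow> chr S q = chr S' q" for v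
  proof (induction v rule: less_induct)
    case (less v q)
    show ?case
    proof (cases "lookup 1 (parse S \<pi> 1) q")
      case (Inl c)
      then show ?thesis using cover[OF op, where i=1 and q=q] cover[OF op', where i=1 and q=q] less.prems len pe by simp
    next
      case (Inr j)
      have a: "1 \<le> j \<and> j \<le> length S \<and> chr S j = chr S q \<and> \<pi> j < \<pi> q"
        using cover[OF op, where i=1 and q=q] less.prems Inr by simp
      have b: "chr S' j = chr S' q"
        using cover[OF op', where i=1 and q=q] less.prems Inr len pe by simp
      have "chr S j = chr S' j" using less.IH[of "\<pi> j" j] a less.prems by simp
      then show ?thesis using a b by simp
    qed
  qed
  show ?thesis
  proof (rule nth_equalityI)
    show "length S = length S'" by (rule len)
    fix n assume "n < length S"
    then have "chr S (n + 1) = chr S' (n + 1)" using main[of "n+1" "\<pi> (n+1)"] by simp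
    then show "S ! n = S' ! n" by (simp add: chr_def)
  qed
qed


lemma PDA_eq: "PDA_set S \<pi> = (\<lambda>i. i + LPF S \<pi> i) ` {1..length S}"
  by (auto simp: PDA_set_def)

lemma PDA_fin: "finite (PDA_set S \<pi>)"
  by (simp add: PDA_eq)

lemma count:
  shows "order_preserving S \<pi> \<Longrightarrow> 1 \<le> i \<Longrightarrow>
    length (parse S \<pi> i) \<le> card (PDA_set S \<pi> \<inter> {i..}) + card (PDA_set S \<pi> \<inter> {i<..})"
proof (induction S \<pi> i rule: parse.induct)
  case (1 S \<pi> i)
  note op = 1(3)
  define P where "P = PDA_set S \<pi>"
  have fP: "finite P" by (simp add: P_def PDA_fin)
  show ?case
  proof (cases "length S < i")
    case True then show ?thesis by (subst parse.simps) simp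
  next
    case nl: False
    then have iS: "i \<in> {1..length S}" using 1 by auto
    show ?thesis
    proof (cases "LPF S \<pi> i = 0")
      case True
      have p: "parse S \<pi> i = (0, 0, chr S i) # parse S \<pi> (i + 1)"
        using True 1 nl by (subst parse.simps) simp
      have IH: "length (parse S \<pi> (i + 1)) \<le> card (P \<inter> {i + 1..}) + card (P \<inter> {i + 1<..})"
        using 1(1) nl True op 1 unfolding P_def by simp
      have iP: "i \<in> P" using iS True unfolding P_def PDA_set_def by force
      have e: "P \<inter> {i..} = insert i (P \<inter> {i + 1..})" using iP by auto
      have c1: "card (P \<inter> {i..}) = Suc (card (P \<inter> {i + 1..}))"
        unfolding e using fP by (subst card_insert_disjoint) auto
      have c2: "card (P \<inter> {i + 1<..}) \<le> card (P \<inter> {i<..})"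
        by (rule card_mono) (use fP in auto)
      show ?thesis using p IH c1 c2 unfolding P_def by simp
    next
      case False
      define i' where "i' = i + LPF S \<pi> i"
      have p: "parse S \<pi> i = (LPF S \<pi> i, src S \<pi> i, 0) # parse S \<pi> i'"
        using False 1 nl unfolding i'_def by (subst parse.simps) simp
      have IH: "length (parse S \<pi> i') \<le> card (P \<inter> {i'..}) + card (P \<inter> {i'<..})"
        using 1(2) nl False op 1 unfolding P_def i'_def by simp
      have iP: "i' \<in> P" using iS unfolding P_def PDA_set_def i'_def by force
      have ii: "i < i'" using False unfolding i'_def by simp
      have c1: "card (insert i' (P \<inter> {i'<..})) \<le> card (P \<inter> {i<..})"
        by (rule card_mono) (use fP iP ii in auto)
      then have c1': "Suc (card (P \<inter> {i'<..})) \<le> card (P \<inter> {i<..})"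
        using fP by (subst (asm) card_insert_disjoint) auto
      have c2: "card (P \<inter> {i'..}) \<le> card (P \<inter> {i..})"
        by (rule card_mono) (use fP ii in auto)
      show ?thesis using p IH c1' c2 unfolding P_def by simp
    qed
  qed
qed

lemma bounds:
  shows "order_preserving S \<pi> \<Longrightarrow> (\<forall>x\<in>set S. x < length S ^ k) \<Longrightarrow> 1 \<le> length S \<Longrightarrow> 1 \<le> i \<Longrightarrow>
    t \<in> set (parse S \<pi> i) \<Longrightarrow>
    fst t \<le> length S \<and> fst (snd t) \<le> length S \<and> snd (snd t) < length S ^ k"
proof (induction S \<pi> i rule: parse.induct)
  case (1 S \<pi> i)
  note op = 1(3)
  show ?case
  proof (cases "length S < i")
    case True then show ?thesis using 1(7) by (subst (asm) parse.simps) simp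
  next
    case nl: False
    then have iS: "i \<in> {1..length S}" using 1 by auto
    note F = LPF_facts[OF op iS]
    show ?thesis
    proof (cases "LPF S \<pi> i = 0")
      case True
      have p: "parse S \<pi> i = (0, 0, chr S i) # parse S \<pi> (i + 1)"
        using True 1 nl by (subst parse.simps) simp
      have "chr S i \<in> set S" using iS by (auto simp: chr_def intro!: nth_mem)
      have "t = (0, 0, chr S i) \<or> t \<in> set (parse S \<pi> (i + 1))" using p 1(7) by simp
      then show ?thesis
      proof
        assume "t = (0, 0, chr S i)"
        then show ?thesis using \<open>chr S i \<in> set S\<close> 1(4) by auto
      next
        assume tt: "t \<in> set (parse S \<pi> (i + 1))"
        have ne: "\<not> (i = 0 \<or> length S < i)" using nl 1(6) by simp
        have ge: "1 \<le> i + 1" by simp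
        show ?thesis by (rule 1(1)[OF ne True op 1(4) 1(5) ge tt])
      qed
    next
      case False
      have p: "parse S \<pi> i = (LPF S \<pi> i, src S \<pi> i, 0) # parse S \<pi> (i + LPF S \<pi> i)"
        using False 1 nl by (subst parse.simps) simp
      have "0 < length S" using iS by auto
      then have "0 < length S ^ k" by simp
      have "t = (LPF S \<pi> i, src S \<pi> i, 0) \<or> t \<in> set (parse S \<pi> (i + LPF S \<pi> i))"
        using p 1(7) by simp
      then show ?thesis
      proof
        assume "t = (LPF S \<pi> i, src S \<pi> i, 0)"
        moreover have "LPF S \<pi> i \<le> length S" using F iS by auto
        moreover have "src S \<pi> i \<le> length S" using F False by auto
        ultimately show ?thesis using \<open>0 < length S ^ k\<close> by simp
      next
        assume tt: "t \<in> set (parse S \<pi> (i + LPF S \<pi> i))"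
        have ne: "\<not> (i = 0 \<or> length S < i)" using nl 1(6) by simp
        have ge: "1 \<le> i + LPF S \<pi> i" using 1(6) by simp
        show ?thesis by (rule 1(2)[OF ne False op 1(4) 1(5) ge tt])
      qed
    qed
  qed
qed

lemma len_triples: "length (concat (map (\<lambda>(a::nat, b::nat, c::nat). [a, b, c]) xs)) = 3 * length xs"
  by (induction xs) auto

definition dec :: "bool list \<Rightarrow> nat list" where
  "dec b = (SOME S. \<exists>\<pi>. order_preserving S \<pi> \<and> enc (nums S \<pi>) = b)"

theorem theorem16:
  "\<forall>k::nat. \<exists>(c::real) (dec :: bool list \<Rightarrow> nat list).
     \<forall>(S :: nat list) (\<pi> :: nat \<Rightarrow> nat).
       length S \<ge> 2 \<longrightarrow> (\<forall>x\<in>set S. x < length S ^ k) \<longrightarrow> order_preserving S \<pi> \<longrightarrow>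
       (\<exists>b :: bool list. dec b = S \<and>
          real (length b) \<le> c * real (card (PDA_set S \<pi>)) * log 2 (real (length S)))"
proof
  fix k :: nat
  show "\<exists>(c::real) (dec :: bool list \<Rightarrow> nat list).
     \<forall>(S :: nat list) (\<pi> :: nat \<Rightarrow> nat).
       length S \<ge> 2 \<longrightarrow> (\<forall>x\<in>set S. x < length S ^ k) \<longrightarrow> order_preserving S \<pi> \<longrightarrow>
       (\<exists>b :: bool list. dec b = S \<and>
          real (length b) \<le> c * real (card (PDA_set S \<pi>)) * log 2 (real (length S)))"
  proof (intro exI allI impI)
    fix S :: "nat list" and \<pi> :: "nat \<Rightarrow> nat"
    assume n2: "length S \<ge> 2" and bd: "\<forall>x\<in>set S. x < length S ^ k" and op: "order_preserving S \<pi>"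
    define n where "n = length S"
    define b where "b = enc (nums S \<pi>)"
    define P where "P = PDA_set S \<pi>"
    define p where "p = card P"
    define m where "m = length (parse S \<pi> 1)"
    define l where "l = length (bits n)"
    define T where "T = (k + 1) * l"
    have decb: "dec b = S"
    proof -
      have ex: "\<exists>S'. \<exists>\<pi>'. order_preserving S' \<pi>' \<and> enc (nums S' \<pi>') = b"
        using op b_def by blast
      obtain \<pi>' where "order_preserving (dec b) \<pi>' \<and> enc (nums (dec b) \<pi>') = b"
        using someI_ex[OF ex] unfolding dec_def by blast
      then have "order_preserving (dec b) \<pi>'" "nums (dec b) \<pi>' = nums S \<pi>"
        using enc_inj b_def by auto
      then show ?thesis using nums_inj op by blast
    qed
    have fP: "finite P" by (simp add: P_def PDA_fin)
    have "1 + LPF S \<pi> 1 \<in> P" using n2 unfolding P_def PDA_set_def by force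
    then have p1: "p \<ge> 1" using fP unfolding p_def by (metis One_nat_def Suc_leI card_gt_0_iff empty_iff)
    have m2: "m \<le> 2 * p"
    proof -
      have "m \<le> card (P \<inter> {1..}) + card (P \<inter> {1<..})"
        using count[OF op, of 1] unfolding m_def P_def by simp
      moreover have "card (P \<inter> {1..}) \<le> p" unfolding p_def by (rule card_mono) (use fP in auto)
      moreover have "card (P \<inter> {1<..}) \<le> p" unfolding p_def by (rule card_mono) (use fP in auto)
      ultimately show ?thesis by simp
    qed
    have nl: "n < 2 ^ l" unfolding l_def by (rule bits_gt)
    have l1: "l \<ge> 1" using nl n2 n_def by (cases l) auto
    have "2 ^ l \<le> (2::nat) ^ T" unfolding T_def by (rule power_increasing) auto
    then have nT: "n < 2 ^ T" using nl by (meson less_le_trans)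
    have "n ^ k \<le> (2 ^ l) ^ k" using nl by (simp add: power_mono)
    also have "\<dots> = 2 ^ (k * l)" by (simp add: power_mult[symmetric] mult.commute)
    also have "\<dots> \<le> 2 ^ T" unfolding T_def by (rule power_increasing) auto
    finally have nkT: "n ^ k \<le> 2 ^ T" .
    have allT: "\<forall>x\<in>set (nums S \<pi>). x < 2 ^ T"
    proof
      fix x assume x: "x \<in> set (nums S \<pi>)"
      show "x < 2 ^ T"
      proof (cases "x = n")
        case True then show ?thesis using nT by simp
      next
        case False
        then have "x \<in> set (concat (map (\<lambda>(a, b, c). [a, b, c]) (parse S \<pi> 1)))"
          using x unfolding nums_def n_def by simp
        then have "\<exists>t\<in>set (parse S \<pi> 1). x \<in> set ((\<lambda>(a, b, c). [a, b, c]) t)"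
          by (simp only: set_concat set_map) blast
        then obtain t where t: "t \<in> set (parse S \<pi> 1)" "x \<in> set ((\<lambda>(a, b, c). [a, b, c]) t)"
          by blast
        obtain a b' c where tt: "t = (a, b', c)" by (cases t) auto
        have "fst t \<le> n \<and> fst (snd t) \<le> n \<and> snd (snd t) < n ^ k"
          using bounds[OF op bd _ _ t(1)] n2 unfolding n_def by simp
        then show ?thesis using t(2) tt nT nkT by auto
      qed
    qed
    have lenn: "length (nums S \<pi>) = 1 + 3 * m" unfolding nums_def m_def by (simp add: len_triples)
    have "length b \<le> (1 + 3 * m) * (2 * T + 1)"
      using len_enc[OF allT] lenn unfolding b_def by simp
    also have "\<dots> \<le> (7 * p) * ((2 * k + 3) * l)"
    proof (rule mult_le_mono)
      show "1 + 3 * m \<le> 7 * p" using m2 p1 by simp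
      show "2 * T + 1 \<le> (2 * k + 3) * l" unfolding T_def using l1 by (simp add: algebra_simps)
    qed
    finally have lbn: "length b \<le> 7 * p * ((2 * k + 3) * l)" .
    have lb: "real (length b) \<le> 7 * real p * (2 * real k + 3) * real l"
    proof -
      have "real (length b) \<le> real (7 * p * ((2 * k + 3) * l))" using lbn by (simp only: of_nat_le_iff)
      then show ?thesis by (simp add: algebra_simps)
    qed
    have "2 ^ (l - 1) \<le> n" unfolding l_def by (rule bits_pow) (use n2 n_def in auto)
    then have a: "real (l - 1) \<le> log 2 (real n)" by (rule le_log2_of_power)
    have "2 ^ 1 \<le> n" using n2 n_def by simp
    then have "real 1 \<le> log 2 (real n)" by (rule le_log2_of_power)
    then have ll: "real l \<le> 2 * log 2 (real n)" using a l1 by (simp add: of_nat_diff)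
    have K: "0 \<le> 7 * real p * (2 * real k + 3)" by simp
    have "real (length b) \<le> 7 * real p * (2 * real k + 3) * (2 * log 2 (real n))"
      using lb mult_left_mono[OF ll K] by linarith
    also have "\<dots> = (14 * (2 * real k + 3)) * real p * log 2 (real n)" by (simp add: algebra_simps)
    finally have fin: "real (length b) \<le> (14 * (2 * real k + 3)) * real p * log 2 (real n)" .
    show "dec b = S \<and> real (length b) \<le> (14 * (2 * real k + 3)) * real (card (PDA_set S \<pi>)) * log 2 (real (length S))"
      using decb fin unfolding p_def P_def n_def by blast
  qed
qed

end
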